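(* Let $n\ge 1$, $k\ge 2$, $\mathcal{K}$ a set of size $k$, $\epsilon\ge 0$ and $p=e^\epsilon/(k-1+e^\epsilon)$. Then the cascades of the full $k$-RR channel $\mathbf{N}$ and the shuffle channel $\mathbf{S}$ in either order are equivalent: $\mathbf{N}\mathbf{S}\equiv\mathbf{S}\mathbf{N}$.
   Context: A dataset is $x=(x_0,\dots,x_{n-1})\in\mathcal{K}^n$; its histogram $h(x)$ is the map $\kappa\mapsto|\{i:x_i=\kappa\}|$, and for a histogram $z$, $\#z$ is the number of datasets with histogram $z$. A channel from finite $\mathcal{X}$ to finite $\mathcal{Y}$ is a row-stochastic matrix; the cascade $\mathbf{C}\mathbf{D}$ of channels $\mathbf{C}:\mathcal{X}\to\mathcal{Y}$, $\mathbf{D}:\mathcal{Y}\to\mathcal{Z}$ is the ordinary matrix product. The full $k$-RR channel $\mathbf{N}:\mathcal{K}^n\to\mathcal{K}^n$ has $\mathbf{N}_{x,y}=\prod_{i=0}^{n-1}q(y_i\mid x_i)$ where $q(b\mid a)=p$ if $b=a$ and $q(b\mid a)=(1-p)/(k-1)$ otherwise. The shuffle channel $\mathbf{S}:\mathcal{K}^n\to\mathcal{K}^n$ has $\mathbf{S}_{x,y}=1/\#h(x)$ if $h(y)=h(x)$ and $0$ otherwise. For a prior $\pi$ on $\mathcal{X}$ and gain function $g:\mathcal{W}\times\mathcal{X}\to[0,\infty)$ ($\mathcal{W}$ finite nonempty), the posterior vulnerability of $\mathbf{C}$ is $V_g[\pi\triangleright\mathbf{C}]=\sum_{y}\max_{w\in\mathcal{W}}\sum_{x}\pi_x\mathbf{C}_{x,y}g(w,x)$.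 Channels $\mathbf{C},\mathbf{C}'$ with the same input set are equivalent ($\mathbf{C}\equiv\mathbf{C}'$) iff $V_g[\pi\triangleright\mathbf{C}]=V_g[\pi\triangleright\mathbf{C}']$ for all priors $\pi$ and all such gain functions $g$. *)

theory Defs
  imports Complex_Main
begin

text \<open>Channels from a finite input set to a finite output set are represented as
  real-valued functions on pairs (row-stochastic matrices).\<close>

definition datasets :: "'a set \<Rightarrow> nat \<Rightarrow> 'a list set" where
  "datasets K n = {xs. set xs \<subseteq> K \<and> length xs = n}"

definition hist :: "'a list \<Rightarrow> 'a \<Rightarrow> nat" where
  "hist x = (\<lambda>\<kappa>. card {i. i < length x \<and> x ! i = \<kappa>})"

definition num_hist :: "'a set \<Rightarrow> nat \<Rightarrow> ('a \<Rightarrow> nat) \<Rightarrow> nat" where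
  "num_hist K n z = card {y \<in> datasets K n. hist y = z}"

definition cascade :: "'y set \<Rightarrow> ('x \<Rightarrow> 'y \<Rightarrow> real) \<Rightarrow> ('y \<Rightarrow> 'z \<Rightarrow> real) \<Rightarrow> 'x \<Rightarrow> 'z \<Rightarrow> real" where
  "cascade Y C D = (\<lambda>x z. \<Sum>y\<in>Y. C x y * D y z)"

definition kRR_q :: "nat \<Rightarrow> real \<Rightarrow> 'a \<Rightarrow> 'a \<Rightarrow> real" where
  "kRR_q k p b a = (if b = a then p else (1 - p) / (real k - 1))"

definition full_kRR :: "nat \<Rightarrow> nat \<Rightarrow> real \<Rightarrow> 'a list \<Rightarrow> 'a list \<Rightarrow> real" where
  "full_kRR n k p = (\<lambda>x y. \<Prod>i<n. kRR_q k p (y ! i) (x ! i))"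

definition shuffle_chan :: "'a set \<Rightarrow> nat \<Rightarrow> 'a list \<Rightarrow> 'a list \<Rightarrow> real" where
  "shuffle_chan K n = (\<lambda>x y. if hist y = hist x then 1 / real (num_hist K n (hist x)) else 0)"

definition post_vuln :: "'x set \<Rightarrow> 'y set \<Rightarrow> 'w set \<Rightarrow> ('w \<Rightarrow> 'x \<Rightarrow> real)
    \<Rightarrow> ('x \<Rightarrow> real) \<Rightarrow> ('x \<Rightarrow> 'y \<Rightarrow> real) \<Rightarrow> real" where
  "post_vuln X Y W g \<pi> C = (\<Sum>y\<in>Y. Max ((\<lambda>w. \<Sum>x\<in>X. \<pi> x * C x y * g w x) ` W))"

definition is_prior :: "'x set \<Rightarrow> ('x \<Rightarrow> real) \<Rightarrow> bool" where
  "is_prior X \<pi> \<longleftrightarrow> (\<forall>x\<in>X. 0 \<le> \<pi> x) \<and> (\<Sum>x\<in>X. \<pi> x) = 1"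

definition is_gain :: "'w set \<Rightarrow> 'x set \<Rightarrow> ('w \<Rightarrow> 'x \<Rightarrow> real) \<Rightarrow> bool" where
  "is_gain W X g \<longleftrightarrow> finite W \<and> W \<noteq> {} \<and> (\<forall>w\<in>W. \<forall>x\<in>X. 0 \<le> g w x)"

end

theory Submission
  imports Defs "HOL-Combinatorics.Permutations"
begin

lemma hist_mset: "hist xs = (\<lambda>a. count (mset xs) a)"
  unfolding hist_def
  by (auto simp: count_mset count_list_eq_length_filter length_filter_conv_card intro!: arg_cong[where f=card])

lemma hist_eq_iff: "hist x = hist y \<longleftrightarrow> mset x = mset y"
  by (auto simp: hist_mset multiset_eq_iff fun_eq_iff)

definition orb :: "'a set \<Rightarrow> nat \<Rightarrow> 'a list \<Rightarrow> 'a list set" where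
  "orb K n z = {y \<in> datasets K n. hist y = hist z}"

lemma finite_orb: "finite K \<Longrightarrow> finite (orb K n z)"
  unfolding orb_def datasets_def by (rule finite_subset[OF _ finite_lists_length_eq[of K n]]) auto

lemma kRR_perm:
  assumes "t permutes {..<n}" "length x = n" "length y = n"
  shows "full_kRR n k p (permute_list t x) (permute_list t y) = full_kRR n k p x y"
proof -
  have "full_kRR n k p (permute_list t x) (permute_list t y)
      = (\<Prod>i<n. kRR_q k p (y ! t i) (x ! t i))"
    unfolding full_kRR_def using assms by (intro prod.cong) (auto simp: permute_list_nth)
  also have "\<dots> = (\<Prod>i<n. ((\<lambda>i. kRR_q k p (y ! i) (x ! i)) \<circ> t) i)" by simp
  also have "\<dots> = full_kRR n k p x y"
    unfolding full_kRR_def by (rule prod.permute[OF assms(1), symmetric])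
  finally show ?thesis .
qed

lemma perm_inv_cancel:
  assumes "t permutes {..<length b}"
  shows "permute_list (inv t) (permute_list t b) = b"
proof -
  have "permute_list (inv t) (permute_list t b) = permute_list (t \<circ> inv t) b"
    using permute_list_compose[of "inv t" b t] permutes_inv[OF assms] by simp
  also have "t \<circ> inv t = id" using assms permutes_inv_o(1) by blast
  finally show ?thesis by simp
qed

lemma orb_reindex:
  assumes "t permutes {..<n}"
  shows "(\<Sum>b\<in>orb K n c. f b) = (\<Sum>b\<in>orb K n c. f (permute_list t b))"
proof -
  have ti: "inv t permutes {..<n}" using assms permutes_inv by blast
  have A: "\<And>a. a \<in> orb K n c \<Longrightarrow> permute_list (inv t) (permute_list t a) = a"
    using perm_inv_cancel assms by (auto simp: orb_def datasets_def)
  have B: "\<And>a. a \<in> orb K n c \<Longrightarrow> permute_list t (permute_list (inv t) a) = a"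
    using perm_inv_cancel[of "inv t"] ti inv_inv_eq[OF permutes_bij[OF assms]] by (auto simp: orb_def datasets_def)
  have C: "\<And>a. a \<in> orb K n c \<Longrightarrow> permute_list t a \<in> orb K n c"
    using assms by (auto simp: orb_def datasets_def hist_eq_iff simp flip: set_mset_mset)
  have D: "\<And>a. a \<in> orb K n c \<Longrightarrow> permute_list (inv t) a \<in> orb K n c"
    using ti by (auto simp: orb_def datasets_def hist_eq_iff simp flip: set_mset_mset)
  show ?thesis
    by (rule sum.reindex_bij_witness[where i="permute_list t" and j="permute_list (inv t)"])
      (use A B C D in auto)
qed

lemma orb_perm:
  assumes "a' \<in> orb K n a" "a \<in> datasets K n"
  obtains t where "t permutes {..<n}" "a' = permute_list t a"
proof -
  have "mset a' = mset a" using assms by (auto simp: orb_def hist_eq_iff)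
  then obtain t where "t permutes {..<length a}" "permute_list t a = a'"
    by (rule mset_eq_permutation)
  moreover have "length a = n" using assms by (auto simp: datasets_def)
  ultimately show ?thesis using that by auto
qed

lemma inner1:
  assumes "a' \<in> orb K n a" "a \<in> datasets K n"
  shows "(\<Sum>b\<in>orb K n c. full_kRR n k p a' b) = (\<Sum>b\<in>orb K n c. full_kRR n k p a b)"
proof -
  obtain t where t: "t permutes {..<n}" "a' = permute_list t a" using orb_perm assms by blast
  have la: "length a = n" using assms by (auto simp: datasets_def)
  have "(\<Sum>b\<in>orb K n c. full_kRR n k p a' b) = (\<Sum>b\<in>orb K n c. full_kRR n k p a' (permute_list t b))"
    by (rule orb_reindex[OF t(1)])
  also have "\<dots> = (\<Sum>b\<in>orb K n c. full_kRR n k p a b)"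
    using t la kRR_perm[OF t(1)] by (intro sum.cong refl) (auto simp: orb_def datasets_def)
  finally show ?thesis .
qed

lemma inner2:
  assumes "a' \<in> orb K n a" "a \<in> datasets K n"
  shows "(\<Sum>b\<in>orb K n c. full_kRR n k p b a') = (\<Sum>b\<in>orb K n c. full_kRR n k p b a)"
proof -
  obtain t where t: "t permutes {..<n}" "a' = permute_list t a" using orb_perm assms by blast
  have la: "length a = n" using assms by (auto simp: datasets_def)
  have "(\<Sum>b\<in>orb K n c. full_kRR n k p b a') = (\<Sum>b\<in>orb K n c. full_kRR n k p (permute_list t b) a')"
    by (rule orb_reindex[OF t(1)])
  also have "\<dots> = (\<Sum>b\<in>orb K n c. full_kRR n k p b a)"
    using t la kRR_perm[OF t(1)] by (intro sum.cong refl) (auto simp: orb_def datasets_def)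
  finally show ?thesis .
qed

lemma key:
  assumes "finite K" "x \<in> datasets K n" "z \<in> datasets K n"
  shows "(\<Sum>b\<in>orb K n z. full_kRR n k p x b) / card (orb K n z)
       = (\<Sum>a\<in>orb K n x. full_kRR n k p a z) / card (orb K n x)"
proof -
  let ?N = "full_kRR n k p"
  have fx: "finite (orb K n x)" and fz: "finite (orb K n z)" using finite_orb assms by auto
  have "x \<in> orb K n x" "z \<in> orb K n z" using assms by (auto simp: orb_def)
  hence cx: "card (orb K n x) > 0" and cz: "card (orb K n z) > 0" using fx fz card_gt_0_iff by blast+
  have "(\<Sum>a\<in>orb K n x. \<Sum>b\<in>orb K n z. ?N a b) = (\<Sum>a\<in>orb K n x. \<Sum>b\<in>orb K n z. ?N x b)"
    using inner1[OF _ assms(2)] by (rule sum.cong[OF refl]) auto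
  also have "\<dots> = card (orb K n x) * (\<Sum>b\<in>orb K n z. ?N x b)" by simp
  finally have e1: "(\<Sum>a\<in>orb K n x. \<Sum>b\<in>orb K n z. ?N a b) = card (orb K n x) * (\<Sum>b\<in>orb K n z. ?N x b)" .
  have "(\<Sum>a\<in>orb K n x. \<Sum>b\<in>orb K n z. ?N a b) = (\<Sum>b\<in>orb K n z. \<Sum>a\<in>orb K n x. ?N a b)"
    by (rule sum.swap)
  also have "\<dots> = (\<Sum>b\<in>orb K n z. \<Sum>a\<in>orb K n x. ?N a z)"
    using inner2[OF _ assms(3)] by (rule sum.cong[OF refl]) auto
  also have "\<dots> = card (orb K n z) * (\<Sum>a\<in>orb K n x. ?N a z)" by simp
  finally have e2: "(\<Sum>a\<in>orb K n x. \<Sum>b\<in>orb K n z. ?N a b) = card (orb K n z) * (\<Sum>a\<in>orb K n x. ?N a z)" .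
  from e1 e2 cx cz show ?thesis by (simp add: field_simps)
qed

lemma cascade_eq:
  assumes "finite K" "x \<in> datasets K n" "z \<in> datasets K n"
  shows "cascade (datasets K n) (full_kRR n k p) (shuffle_chan K n) x z
       = cascade (datasets K n) (shuffle_chan K n) (full_kRR n k p) x z"
proof -
  have fD: "finite (datasets K n)" using assms finite_lists_length_eq by (simp add: datasets_def)
  have "cascade (datasets K n) (full_kRR n k p) (shuffle_chan K n) x z
      = (\<Sum>y\<in>datasets K n. if y \<in> orb K n z then full_kRR n k p x y / card (orb K n z) else 0)"
    unfolding cascade_def shuffle_chan_def num_hist_def
    by (intro sum.cong) (auto simp: orb_def)
  also have "\<dots> = (\<Sum>b\<in>orb K n z. full_kRR n k p x b) / card (orb K n z)"
    using fD by (simp add: sum.If_cases sum_divide_distrib orb_def Int_def)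
  also have "\<dots> = (\<Sum>a\<in>orb K n x. full_kRR n k p a z) / card (orb K n x)"
    by (rule key[OF assms])
  also have "\<dots> = (\<Sum>y\<in>datasets K n. if y \<in> orb K n x then full_kRR n k p y z / card (orb K n x) else 0)"
    using fD by (simp add: sum.If_cases sum_divide_distrib orb_def Int_def)
  also have "\<dots> = cascade (datasets K n) (shuffle_chan K n) (full_kRR n k p) x z"
    unfolding cascade_def shuffle_chan_def num_hist_def
    by (intro sum.cong) (auto simp: orb_def)
  finally show ?thesis .
qed

theorem mainTheorem2:
  fixes K :: "'a set" and n k :: nat and \<epsilon> p :: real
    and W :: "'w set" and g :: "'w \<Rightarrow> 'a list \<Rightarrow> real" and \<pi> :: "'a list \<Rightarrow> real"
  assumes "n \<ge> 1" and "k \<ge> 2" and "finite K" and "card K = k" and "\<epsilon> \<ge> 0"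
    and "p = exp \<epsilon> / (real k - 1 + exp \<epsilon>)"
    and "is_prior (datasets K n) \<pi>"
    and "is_gain W (datasets K n) g"
  shows "post_vuln (datasets K n) (datasets K n) W g \<pi>
           (cascade (datasets K n) (full_kRR n k p) (shuffle_chan K n))
       = post_vuln (datasets K n) (datasets K n) W g \<pi>
           (cascade (datasets K n) (shuffle_chan K n) (full_kRR n k p))"
  unfolding post_vuln_def
  using cascade_eq[OF assms(3)] by (intro sum.cong refl arg_cong[where f=Max] image_cong) auto

end
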